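(* Consider the Gaussian broadcast model on $P=\mathcal{HS}_3$ with $\alpha_3=1/3$. Let $t\ge2$ be an integer, $N$ a positive integer, and $(a_{(i,j)})_{i,j\in[N]}$ a real matrix that is not identically zero. Then $\zeta:=\sum_{(i,j)\in[N]^2}a_{(i,j)}X_{(i,j,t-i-j)}$ satisfies $$\frac{\operatorname{Cov}(\zeta,X_0)}{\sqrt{\operatorname{Var}(\zeta)}}\le\frac{2^{24}N^2}{\sqrt{\log t}}.$$
   Context: Infinite model: $\mathcal{HS}_{d+1}=\{(x_1,\dots,x_{d+1})\in\mathbb Z^{d+1}:x_1+\dots+x_{d+1}\ge0\}$ with $u\le v$ iff $v-u\in\mathbb Z_{\ge0}^{d+1}$; layer $L_t$ = points with coordinate sum $t$; each point $v$ of rank $\ge1$ covers exactly the $d+1$ points $v-e_i$ (the set $\mathfrak p(v)$). Gaussian broadcast model: $X_0\sim\mathcal N(0,1)$; independently, i.i.d. $W_{u\to v}\sim\mathcal N(0,1)$ for covering pairs $u\lessdot v$; $X_v=X_0$ for every $v\in L_0$; and $X_v=\alpha_{d+1}\sum_{u\in\mathfrak p(v)}(X_u+W_{u\to v})$ for $v$ of rank $\ge1$. Here $d=2$; $\log$ is the natural logarithm. *)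

theory Defs
  imports "HOL-Probability.Probability"
begin

text \<open>Points of HS_3 are represented as integer triples; rank = coordinate sum.\<close>
type_synonym pt = "int \<times> int \<times> int"

definition rank :: "pt \<Rightarrow> int" where
  "rank v = (case v of (x, y, z) \<Rightarrow> x + y + z)"

definition pred_pt :: "pt \<Rightarrow> nat \<Rightarrow> pt" where
  "pred_pt v i = (case v of (x, y, z) \<Rightarrow>
      if i = 0 then (x - 1, y, z) else if i = 1 then (x, y - 1, z) else (x, y, z - 1))"

text \<open>Covering pairs u \<lessdot> v of HS_3: v = u + e_i with u in HS_3.\<close>
definition covers :: "(pt \<times> pt) set" where
  "covers = {(u, v). rank u \<ge> 0 \<and> (\<exists>i<3. u = pred_pt v i)}"

definition cov :: "'a measure \<Rightarrow> ('a \<Rightarrow> real) \<Rightarrow> ('a \<Rightarrow> real) \<Rightarrow> real" where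
  "cov M Y Z = integral\<^sup>L M (\<lambda>\<omega>. (Y \<omega> - integral\<^sup>L M Y) * (Z \<omega> - integral\<^sup>L M Z))"

end

theory Submission
  imports Defs "HOL-Library.Groups_Big_Fun"
begin

lemma std_normal_facts:
  assumes P: "prob_space M" and D: "distributed M lborel Y std_normal_density"
  shows "integrable M Y" "integral\<^sup>L M Y = 0"
    "integrable M (\<lambda>\<omega>. Y \<omega> * Y \<omega>)" "integral\<^sup>L M (\<lambda>\<omega>. Y \<omega> * Y \<omega>) = 1"
proof -
  interpret prob_space M by fact
  have nn: "\<And>x. 0 \<le> std_normal_density x" by (simp add: normal_density_nonneg)
  show i1: "integrable M Y"
    using distributed_integrable[OF D, of "\<lambda>x. x"] integrable_std_normal_moment[of 1] nn by simp
  show e: "integral\<^sup>L M Y = 0" using standard_normal_distributed_expectation[OF D] .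
  show i2: "integrable M (\<lambda>\<omega>. Y \<omega> * Y \<omega>)"
    using distributed_integrable[OF D, of "\<lambda>x. x * x"] integrable_std_normal_moment[of 2] nn
    by (simp add: power2_eq_square)
  have "variance Y = 1" using standard_normal_distributed_variance[OF D] .
  then show "integral\<^sup>L M (\<lambda>\<omega>. Y \<omega> * Y \<omega>) = 1" using e by (simp add: power2_eq_square)
qed

lemma gauss_pair:
  assumes P: "prob_space M"
    and D: "\<And>i. i \<in> J \<Longrightarrow> distributed M lborel (Y i) std_normal_density"
    and I: "prob_space.indep_vars M (\<lambda>_. borel) Y J"
    and ij: "i \<in> J" "j \<in> J"
  shows "integrable M (\<lambda>\<omega>. Y i \<omega> * Y j \<omega>)"
    "integral\<^sup>L M (\<lambda>\<omega>. Y i \<omega> * Y j \<omega>) = (if i = j then 1 else 0)"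
proof -
  interpret prob_space M by fact
  have "integrable M (\<lambda>\<omega>. Y i \<omega> * Y j \<omega>) \<and>
    integral\<^sup>L M (\<lambda>\<omega>. Y i \<omega> * Y j \<omega>) = (if i = j then 1 else 0)"
  proof (cases "i = j")
    case True then show ?thesis using std_normal_facts[OF P D[OF ij(1)]] by simp
  next
    case False
    have "indep_vars (\<lambda>_. borel) Y (insert i {j})"
      using indep_vars_subset[OF I] ij by auto
    from indep_vars_sum[OF _ _ this] False
    have iv: "indep_var borel (Y i) borel (Y j)" by simp
    show ?thesis using indep_var_lebesgue_integral[OF iv] indep_var_integrable[OF iv]
      std_normal_facts[OF P D[OF ij(1)]] std_normal_facts[OF P D[OF ij(2)]] False by simp
  qed
  then show "integrable M (\<lambda>\<omega>. Y i \<omega> * Y j \<omega>)"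
    "integral\<^sup>L M (\<lambda>\<omega>. Y i \<omega> * Y j \<omega>) = (if i = j then 1 else 0)" by auto
qed

lemma gauss_lin:
  assumes P: "prob_space M"
    and D: "\<And>i. i \<in> J \<Longrightarrow> distributed M lborel (Y i) std_normal_density"
    and I: "prob_space.indep_vars M (\<lambda>_. borel) Y J"
    and F: "finite F" "F \<subseteq> J"
  shows "integral\<^sup>L M (\<lambda>\<omega>. \<Sum>i\<in>F. c i * Y i \<omega>) = 0"
    "integral\<^sup>L M (\<lambda>\<omega>. (\<Sum>i\<in>F. c i * Y i \<omega>) * (\<Sum>i\<in>F. d i * Y i \<omega>)) = (\<Sum>i\<in>F. c i * d i)"
proof -
  have int1: "\<And>i. i \<in> F \<Longrightarrow> integrable M (Y i)" using std_normal_facts[OF P D] F by blast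
  have e1: "\<And>i. i \<in> F \<Longrightarrow> integral\<^sup>L M (Y i) = 0" using std_normal_facts[OF P D] F by blast
  show "integral\<^sup>L M (\<lambda>\<omega>. \<Sum>i\<in>F. c i * Y i \<omega>) = 0"
    using int1 e1 by (subst Bochner_Integration.integral_sum) auto
  have eq: "(\<lambda>\<omega>. (\<Sum>i\<in>F. c i * Y i \<omega>) * (\<Sum>i\<in>F. d i * Y i \<omega>))
      = (\<lambda>\<omega>. \<Sum>i\<in>F. \<Sum>j\<in>F. (c i * d j) * (Y i \<omega> * Y j \<omega>))"
    by (rule ext) (simp add: sum_product mult_ac)
  have int2: "\<And>i j. i \<in> F \<Longrightarrow> j \<in> F \<Longrightarrow> integrable M (\<lambda>\<omega>. Y i \<omega> * Y j \<omega>)"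
    using gauss_pair(1)[OF P D I] F by blast
  have e2: "\<And>i j. i \<in> F \<Longrightarrow> j \<in> F \<Longrightarrow> integral\<^sup>L M (\<lambda>\<omega>. Y i \<omega> * Y j \<omega>) = (if i = j then 1 else 0)"
    using gauss_pair(2)[OF P D I] F by blast
  have "integral\<^sup>L M (\<lambda>\<omega>. \<Sum>i\<in>F. \<Sum>j\<in>F. (c i * d j) * (Y i \<omega> * Y j \<omega>))
      = (\<Sum>i\<in>F. \<Sum>j\<in>F. (c i * d j) * (if i = j then 1 else 0))"
    using int2 e2 by (simp add: Bochner_Integration.integral_sum integrable_sum)
  also have "\<dots> = (\<Sum>i\<in>F. c i * d i)"
    using F(1) by (simp add: if_distrib cong: if_cong)
  finally show "integral\<^sup>L M (\<lambda>\<omega>. (\<Sum>i\<in>F. c i * Y i \<omega>) * (\<Sum>i\<in>F. d i * Y i \<omega>)) = (\<Sum>i\<in>F. c i * d i)"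
    using eq by simp
qed

definition fs :: "(int \<times> int \<Rightarrow> real) \<Rightarrow> bool" where
  "fs f \<longleftrightarrow> finite {x. f x \<noteq> 0}"

lemma fs_mult1: "fs f \<Longrightarrow> fs (\<lambda>x. f x * g x)"
  unfolding fs_def by (rule finite_subset[of _ "{x. f x \<noteq> 0}"]) auto
lemma fs_mult2: "fs g \<Longrightarrow> fs (\<lambda>x. f x * g x)"
  unfolding fs_def by (rule finite_subset[of _ "{x. g x \<noteq> 0}"]) auto
lemma fs_add: "fs f \<Longrightarrow> fs g \<Longrightarrow> fs (\<lambda>x. f x + g x)"
  unfolding fs_def by (rule finite_subset[of _ "{x. f x \<noteq> 0} \<union> {x. g x \<noteq> 0}"]) auto
lemma fs_diff: "fs f \<Longrightarrow> fs g \<Longrightarrow> fs (\<lambda>x. f x - g x)"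
  unfolding fs_def by (rule finite_subset[of _ "{x. f x \<noteq> 0} \<union> {x. g x \<noteq> 0}"]) auto
lemma fs_shift: "fs f \<Longrightarrow> fs (\<lambda>x. f (x + c))"
proof -
  assume "fs f"
  have "{x. f (x + c) \<noteq> 0} = (\<lambda>y. y - c) ` {x. f x \<noteq> 0}"
  proof (rule set_eqI, rule iffI)
    fix x assume "x \<in> {x. f (x + c) \<noteq> 0}"
    then show "x \<in> (\<lambda>y. y - c) ` {x. f x \<noteq> 0}" by (intro image_eqI[of _ _ "x + c"]) auto
  qed auto
  then show ?thesis using \<open>fs f\<close> unfolding fs_def by simp
qed
lemma fs_shiftm: "fs f \<Longrightarrow> fs (\<lambda>x. f (x - c))"
  using fs_shift[of f "-c"] by simp
lemma fs_power2: "fs f \<Longrightarrow> fs (\<lambda>x. (f x)\<^sup>2)"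
  using fs_mult1[of f f] by (simp add: power2_eq_square)

lemma SA_add: "fs f \<Longrightarrow> fs g \<Longrightarrow> Sum_any (\<lambda>x. f x + g x) = Sum_any f + Sum_any g"
  unfolding fs_def by (rule Sum_any.distrib)
lemma SA_cmult: "fs f \<Longrightarrow> Sum_any (\<lambda>x. c * f x) = c * Sum_any f"
  unfolding fs_def by (rule Sum_any_right_distrib[symmetric])
lemma SA_multc: "fs f \<Longrightarrow> Sum_any (\<lambda>x. f x * c) = Sum_any f * c"
  unfolding fs_def by (rule Sum_any_left_distrib[symmetric])
lemma SA_diff: "fs f \<Longrightarrow> fs g \<Longrightarrow> Sum_any (\<lambda>x. f x - g x) = Sum_any f - Sum_any g"
  using SA_add[of f "\<lambda>x. - g x"] SA_cmult[of g "-1"]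
  by (simp add: fs_def)
lemma SA_shift: "Sum_any (\<lambda>x. f (x + c)) = Sum_any (f :: int \<times> int \<Rightarrow> real)"
  by (rule Sum_any.reindex_cong[of "\<lambda>x. x + c", symmetric])
     (auto simp: bij_def inj_def surj_def intro!: exI[of _ "_ - c"])
lemma SA_shiftm: "Sum_any (\<lambda>x. f (x - c)) = Sum_any (f :: int \<times> int \<Rightarrow> real)"
  using SA_shift[of f "-c"] by simp
lemma SA_eq: "finite A \<Longrightarrow> (\<And>x. x \<notin> A \<Longrightarrow> f x = 0) \<Longrightarrow> Sum_any f = sum f A"
  by (rule Sum_any.expand_superset) auto
lemma SA_sum: "finite P \<Longrightarrow> (\<And>p. p \<in> P \<Longrightarrow> fs (f p)) \<Longrightarrow>
   Sum_any (\<lambda>x. \<Sum>p\<in>P. f p x) = (\<Sum>p\<in>P. Sum_any (f p))"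
proof (induction P rule: finite_induct)
  case empty then show ?case by simp
next
  case (insert p P)
  have "fs (\<lambda>x. \<Sum>p\<in>P. f p x)"
  proof -
    have "{x. (\<Sum>p\<in>P. f p x) \<noteq> 0} \<subseteq> (\<Union>p\<in>P. {x. f p x \<noteq> 0})"
      by (auto elim: sum.not_neutral_contains_not_neutral)
    then show ?thesis using insert unfolding fs_def by (auto intro: finite_subset)
  qed
  then show ?case using insert by (simp add: SA_add)
qed
lemma SA_nonneg: "(\<And>x. 0 \<le> f x) \<Longrightarrow> 0 \<le> Sum_any (f :: int \<times> int \<Rightarrow> real)"
  by (simp add: Sum_any.expand_set sum_nonneg)
lemma SA_mono: "fs f \<Longrightarrow> fs g \<Longrightarrow> (\<And>x. f x \<le> g x) \<Longrightarrow> Sum_any f \<le> Sum_any g"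
  using SA_diff[of g f] SA_nonneg[of "\<lambda>x. g x - f x"] by simp

definition eps :: "nat \<Rightarrow> int \<times> int" where
  "eps i = (if i = 0 then (1,0) else if i = 1 then (0,1) else (0,0))"

primrec q :: "nat \<Rightarrow> int \<times> int \<Rightarrow> real" where
  "q 0 x = (if x = (0,0) then 1 else 0)"
| "q (Suc m) x = (\<Sum>i\<in>{0,1,2::nat}. q m (x - eps i)) / 3"

lemma q_nonneg: "0 \<le> q m x"
  by (induction m arbitrary: x) (auto intro!: sum_nonneg)

lemma q_supp: "q m x \<noteq> 0 \<Longrightarrow> x \<in> {0..int m} \<times> {0..int m}"
proof (induction m arbitrary: x)
  case 0 then show ?case by (auto split: if_splits)
next
  case (Suc m)
  then have "q m (x - eps 0) \<noteq> 0 \<or> q m (x - eps 1) \<noteq> 0 \<or> q m (x - eps 2) \<noteq> 0"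
    by auto
  then show ?case using Suc.IH
    by (cases x) (auto simp: eps_def, fastforce+)
qed

lemma fs_q: "fs (q m)"
  unfolding fs_def by (rule finite_subset[of _ "{0..int m} \<times> {0..int m}"]) (auto dest: q_supp)

lemma fs_sum: "finite P \<Longrightarrow> (\<And>p. p \<in> P \<Longrightarrow> fs (f p)) \<Longrightarrow> fs (\<lambda>x. \<Sum>p\<in>P. f p x)"
proof -
  assume a: "finite P" "\<And>p. p \<in> P \<Longrightarrow> fs (f p)"
  have "{x. (\<Sum>p\<in>P. f p x) \<noteq> 0} \<subseteq> (\<Union>p\<in>P. {x. f p x \<noteq> 0})"
    by (auto elim: sum.not_neutral_contains_not_neutral)
  moreover have "finite (\<Union>p\<in>P. {x. f p x \<noteq> 0})" using a unfolding fs_def by blast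
  ultimately show ?thesis unfolding fs_def by (rule finite_subset)
qed

lemma q_step_SA:
  "Sum_any (\<lambda>x. q (Suc m) x * f x) = (\<Sum>i\<in>{0,1,2::nat}. Sum_any (\<lambda>y. q m y * f (y + eps i))) / 3"
proof -
  have fsi: "\<And>i. fs (\<lambda>x. q m (x - eps i) * f x)" by (intro fs_mult1 fs_shiftm fs_q)
  have "Sum_any (\<lambda>x. q (Suc m) x * f x) = Sum_any (\<lambda>x. (1/3) * (\<Sum>i\<in>{0,1,2::nat}. q m (x - eps i) * f x))"
    by (rule Sum_any.cong) (simp add: algebra_simps)
  also have "\<dots> = (1/3) * (\<Sum>i\<in>{0,1,2::nat}. Sum_any (\<lambda>x. q m (x - eps i) * f x))"
  proof -
    have fsS: "fs (\<lambda>x. \<Sum>i\<in>{0,1,2::nat}. q m (x - eps i) * f x)"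
      by (rule fs_sum) (auto simp: fsi)
    show ?thesis
      using SA_cmult[OF fsS, of "1/3"] SA_sum[of "{0,1,2::nat}" "\<lambda>i x. q m (x - eps i) * f x"] fsi
      by simp
  qed
  also have "(\<lambda>i. Sum_any (\<lambda>x. q m (x - eps i) * f x)) = (\<lambda>i. Sum_any (\<lambda>y. q m y * f (y + eps i)))"
  proof
    fix i
    show "Sum_any (\<lambda>x. q m (x - eps i) * f x) = Sum_any (\<lambda>y. q m y * f (y + eps i))"
      using SA_shift[of "\<lambda>x. q m (x - eps i) * f x" "eps i"] by simp
  qed
  finally show ?thesis by simp
qed

definition r :: "nat \<Rightarrow> int \<times> int \<Rightarrow> real" where
  "r m z = Sum_any (\<lambda>x. q m x * q m (x + z))"

definition dd :: "nat \<Rightarrow> int \<times> int \<Rightarrow> real" where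
  "dd m z = Sum_any (\<lambda>x. (q m x - q m (x + z))\<^sup>2)"

lemma r_0: "r 0 z = (if z = (0,0) then 1 else 0)"
proof -
  have "r 0 z = sum (\<lambda>x. q 0 x * q 0 (x + z)) {(0,0)}"
    unfolding r_def by (rule SA_eq) auto
  then show ?thesis by (simp add: zero_prod_def)
qed

lemma r_Suc: "r (Suc m) z = (\<Sum>i\<in>{0,1,2::nat}. \<Sum>j\<in>{0,1,2::nat}. r m (z + eps i - eps j)) / 9"
proof -
  have "r (Suc m) z = (\<Sum>i\<in>{0,1,2::nat}. Sum_any (\<lambda>y. q m y * q (Suc m) (y + eps i + z))) / 3"
    unfolding r_def by (subst q_step_SA) (simp add: add.assoc)
  also have "(\<lambda>i. Sum_any (\<lambda>y. q m y * q (Suc m) (y + eps i + z)))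
     = (\<lambda>i. (\<Sum>j\<in>{0,1,2::nat}. r m (z + eps i - eps j)) / 3)"
  proof
    fix i
    have fsj: "\<And>j. fs (\<lambda>y. q m y * q m (y + (z + eps i - eps j)))" by (intro fs_mult1 fs_q)
    have "Sum_any (\<lambda>y. q m y * q (Suc m) (y + eps i + z))
        = Sum_any (\<lambda>y. (1/3) * (\<Sum>j\<in>{0,1,2::nat}. q m y * q m (y + (z + eps i - eps j))))"
      by (rule Sum_any.cong) (simp add: algebra_simps)
    also have "\<dots> = (1/3) * (\<Sum>j\<in>{0,1,2::nat}. r m (z + eps i - eps j))"
    proof -
      have fsS: "fs (\<lambda>y. \<Sum>j\<in>{0,1,2::nat}. q m y * q m (y + (z + eps i - eps j)))"
        by (rule fs_sum) (auto simp: fsj)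
      show ?thesis unfolding r_def
        using SA_cmult[OF fsS, of "1/3"] SA_sum[of "{0,1,2::nat}" "\<lambda>j y. q m y * q m (y + (z + eps i - eps j))"] fsj
        by simp
    qed
    finally show "Sum_any (\<lambda>y. q m y * q (Suc m) (y + eps i + z)) = (\<Sum>j\<in>{0,1,2::nat}. r m (z + eps i - eps j)) / 3"
      by simp
  qed
  finally show ?thesis by (simp add: sum_divide_distrib[symmetric])
qed

lemma r_sym: "r m (- z) = r m z"
  unfolding r_def using SA_shift[of "\<lambda>x. q m x * q m (x - z)" z] by (simp add: mult.commute)

lemma dd_eq: "dd m z = 2 * r m 0 - 2 * r m z"
proof -
  have fa: "fs (\<lambda>x. (q m x)\<^sup>2)" by (rule fs_power2, rule fs_q)
  have fb0: "fs (\<lambda>x. q m x * q m (x + z))" by (rule fs_mult1, rule fs_q)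
  have fb: "fs (\<lambda>x. 2 * (q m x * q m (x + z)))" by (rule fs_mult2, rule fb0)
  have fc: "fs (\<lambda>x. (q m (x + z))\<^sup>2)" by (rule fs_power2, rule fs_shift, rule fs_q)
  have fab: "fs (\<lambda>x. (q m x)\<^sup>2 - 2 * (q m x * q m (x + z)))" by (rule fs_diff[OF fa fb])
  have "dd m z = Sum_any (\<lambda>x. ((q m x)\<^sup>2 - 2 * (q m x * q m (x + z))) + (q m (x + z))\<^sup>2)"
    unfolding dd_def by (rule Sum_any.cong) (simp add: power2_diff)
  also have "\<dots> = Sum_any (\<lambda>x. (q m x)\<^sup>2 - 2 * (q m x * q m (x + z))) + Sum_any (\<lambda>x. (q m (x + z))\<^sup>2)"
    by (rule SA_add[OF fab fc])
  also have "Sum_any (\<lambda>x. (q m x)\<^sup>2 - 2 * (q m x * q m (x + z))) = Sum_any (\<lambda>x. (q m x)\<^sup>2) - Sum_any (\<lambda>x. 2 * (q m x * q m (x + z)))"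
    by (rule SA_diff[OF fa fb])
  also have "Sum_any (\<lambda>x. 2 * (q m x * q m (x + z))) = 2 * r m z"
    unfolding r_def by (rule SA_cmult[OF fb0])
  also have "Sum_any (\<lambda>x. (q m (x + z))\<^sup>2) = Sum_any (\<lambda>x. (q m x)\<^sup>2)"
    by (rule SA_shift)
  also have "Sum_any (\<lambda>x. (q m x)\<^sup>2) = r m 0"
    unfolding r_def by (rule Sum_any.cong) (simp add: power2_eq_square)
  finally show ?thesis by simp
qed

lemma dd_nonneg: "0 \<le> dd m z"
  unfolding dd_def by (rule SA_nonneg) simp

lemma r_le: "r m z \<le> r m 0"
  using dd_eq[of m z] dd_nonneg[of m z] by simp

lemma r_nonneg: "0 \<le> r m z"
  unfolding r_def by (rule SA_nonneg) (simp add: q_nonneg)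

lemma r_tele: "r m 0 - r (Suc m) 0 = (dd m (1,-1) + dd m (1,0) + dd m (0,1)) / 9"
proof -
  have s1: "r m (-1, 1) = r m (1,-1)" using r_sym[of m "(1,-1)"] by simp
  have s2: "r m (-1, 0) = r m (1,0)" using r_sym[of m "(1,0)"] by simp
  have s3: "r m (0, -1) = r m (0,1)" using r_sym[of m "(0,1)"] by simp
  have e: "r (Suc m) 0 = (3 * r m 0 + 2 * r m (1,-1) + 2 * r m (1,0) + 2 * r m (0,1)) / 9"
    unfolding r_Suc by (simp add: eps_def s1 s2 s3 zero_prod_def)
  show ?thesis
    using dd_eq[of m "(1,-1)"] dd_eq[of m "(1,0)"] dd_eq[of m "(0,1)"] e
    by simp
qed

lemma SA_q_lin: "Sum_any (\<lambda>y. q m y * (g y + c)) = Sum_any (\<lambda>y. q m y * g y) + c * Sum_any (q m)"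
proof -
  have "Sum_any (\<lambda>y. q m y * (g y + c)) = Sum_any (\<lambda>y. q m y * g y + c * q m y)"
    by (rule Sum_any.cong) (simp add: algebra_simps)
  also have "\<dots> = Sum_any (\<lambda>y. q m y * g y) + Sum_any (\<lambda>y. c * q m y)"
    by (rule SA_add[OF fs_mult1[OF fs_q] fs_mult2[OF fs_q]])
  also have "Sum_any (\<lambda>y. c * q m y) = c * Sum_any (q m)"
    by (rule SA_cmult[OF fs_q])
  finally show ?thesis .
qed

lemma SA_q_quad: "Sum_any (\<lambda>y. q m y * (g y + c)\<^sup>2) =
   Sum_any (\<lambda>y. q m y * (g y)\<^sup>2) + 2 * c * Sum_any (\<lambda>y. q m y * g y) + c\<^sup>2 * Sum_any (q m)"
proof -
  have "Sum_any (\<lambda>y. q m y * (g y + c)\<^sup>2) = Sum_any (\<lambda>y. (q m y * (g y)\<^sup>2 + (2 * c) * (q m y * g y)) + c\<^sup>2 * q m y)"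
    by (rule Sum_any.cong) (simp add: algebra_simps power2_eq_square)
  also have "\<dots> = Sum_any (\<lambda>y. q m y * (g y)\<^sup>2 + (2 * c) * (q m y * g y)) + Sum_any (\<lambda>y. c\<^sup>2 * q m y)"
    by (rule SA_add[OF fs_add[OF fs_mult1[OF fs_q] fs_mult2[OF fs_mult1[OF fs_q]]] fs_mult2[OF fs_q]])
  also have "Sum_any (\<lambda>y. q m y * (g y)\<^sup>2 + (2 * c) * (q m y * g y)) =
      Sum_any (\<lambda>y. q m y * (g y)\<^sup>2) + Sum_any (\<lambda>y. (2 * c) * (q m y * g y))"
    by (rule SA_add[OF fs_mult1[OF fs_q] fs_mult2[OF fs_mult1[OF fs_q]]])
  also have "Sum_any (\<lambda>y. (2 * c) * (q m y * g y)) = 2 * c * Sum_any (\<lambda>y. q m y * g y)"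
    by (rule SA_cmult[OF fs_mult1[OF fs_q]])
  also have "Sum_any (\<lambda>y. c\<^sup>2 * q m y) = c\<^sup>2 * Sum_any (q m)"
    by (rule SA_cmult[OF fs_q])
  finally show ?thesis .
qed

lemma M0: "Sum_any (q m) = 1"
proof (induction m)
  case 0
  have "Sum_any (q 0) = sum (q 0) {(0,0)}" by (rule SA_eq) auto
  then show ?case by simp
next
  case (Suc m)
  have "Sum_any (q (Suc m)) = Sum_any (\<lambda>x. q (Suc m) x * 1)" by simp
  also have "\<dots> = (\<Sum>i\<in>{0,1,2::nat}. Sum_any (\<lambda>y. q m y * 1)) / 3" by (rule q_step_SA)
  finally show ?case using Suc by simp
qed

lemma M1a: "Sum_any (\<lambda>x. q m x * real_of_int (fst x)) = m / 3"
proof (induction m)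
  case 0
  have "Sum_any (\<lambda>x. q 0 x * real_of_int (fst x)) = sum (\<lambda>x. q 0 x * real_of_int (fst x)) {(0,0)}"
    by (rule SA_eq) auto
  then show ?case by simp
next
  case (Suc m)
  have "Sum_any (\<lambda>x. q (Suc m) x * real_of_int (fst x)) =
     (\<Sum>i\<in>{0,1,2::nat}. Sum_any (\<lambda>y. q m y * real_of_int (fst (y + eps i)))) / 3" by (rule q_step_SA)
  also have "\<dots> = (\<Sum>i\<in>{0,1,2::nat}. Sum_any (\<lambda>y. q m y * (real_of_int (fst y) + real_of_int (fst (eps i))))) / 3"
    by simp
  also have "\<dots> = (\<Sum>i\<in>{0,1,2::nat}. m / 3 + real_of_int (fst (eps i))) / 3"
    by (simp only: SA_q_lin Suc M0) simp
  finally show ?case by (simp add: eps_def)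
qed

lemma M1b: "Sum_any (\<lambda>x. q m x * real_of_int (snd x)) = m / 3"
proof (induction m)
  case 0
  have "Sum_any (\<lambda>x. q 0 x * real_of_int (snd x)) = sum (\<lambda>x. q 0 x * real_of_int (snd x)) {(0,0)}"
    by (rule SA_eq) auto
  then show ?case by simp
next
  case (Suc m)
  have "Sum_any (\<lambda>x. q (Suc m) x * real_of_int (snd x)) =
     (\<Sum>i\<in>{0,1,2::nat}. Sum_any (\<lambda>y. q m y * real_of_int (snd (y + eps i)))) / 3" by (rule q_step_SA)
  also have "\<dots> = (\<Sum>i\<in>{0,1,2::nat}. Sum_any (\<lambda>y. q m y * (real_of_int (snd y) + real_of_int (snd (eps i))))) / 3"
    by simp
  also have "\<dots> = (\<Sum>i\<in>{0,1,2::nat}. m / 3 + real_of_int (snd (eps i))) / 3"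
    by (simp only: SA_q_lin Suc M0) simp
  finally show ?case by (simp add: eps_def)
qed

lemma M2a: "Sum_any (\<lambda>x. q m x * (real_of_int (fst x))\<^sup>2) = (real m ^ 2 + 2 * m) / 9"
proof (induction m)
  case 0
  have "Sum_any (\<lambda>x. q 0 x * (real_of_int (fst x))\<^sup>2) = sum (\<lambda>x. q 0 x * (real_of_int (fst x))\<^sup>2) {(0,0)}"
    by (rule SA_eq) auto
  then show ?case by simp
next
  case (Suc m)
  have "Sum_any (\<lambda>x. q (Suc m) x * (real_of_int (fst x))\<^sup>2) =
     (\<Sum>i\<in>{0,1,2::nat}. Sum_any (\<lambda>y. q m y * (real_of_int (fst (y + eps i)))\<^sup>2)) / 3" by (rule q_step_SA)
  also have "\<dots> = (\<Sum>i\<in>{0,1,2::nat}. Sum_any (\<lambda>y. q m y * (real_of_int (fst y) + real_of_int (fst (eps i)))\<^sup>2)) / 3"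
    by simp
  also have "\<dots> = (\<Sum>i\<in>{0,1,2::nat}. (real m ^ 2 + 2 * m) / 9 + 2 * real_of_int (fst (eps i)) * (m / 3) + (real_of_int (fst (eps i)))\<^sup>2) / 3"
    by (simp only: SA_q_quad Suc M0 M1a) simp
  finally show ?case by (simp add: eps_def field_simps power2_eq_square)
qed

lemma M2b: "Sum_any (\<lambda>x. q m x * (real_of_int (snd x))\<^sup>2) = (real m ^ 2 + 2 * m) / 9"
proof (induction m)
  case 0
  have "Sum_any (\<lambda>x. q 0 x * (real_of_int (snd x))\<^sup>2) = sum (\<lambda>x. q 0 x * (real_of_int (snd x))\<^sup>2) {(0,0)}"
    by (rule SA_eq) auto
  then show ?case by simp
next
  case (Suc m)
  have "Sum_any (\<lambda>x. q (Suc m) x * (real_of_int (snd x))\<^sup>2) =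
     (\<Sum>i\<in>{0,1,2::nat}. Sum_any (\<lambda>y. q m y * (real_of_int (snd (y + eps i)))\<^sup>2)) / 3" by (rule q_step_SA)
  also have "\<dots> = (\<Sum>i\<in>{0,1,2::nat}. Sum_any (\<lambda>y. q m y * (real_of_int (snd y) + real_of_int (snd (eps i)))\<^sup>2)) / 3"
    by simp
  also have "\<dots> = (\<Sum>i\<in>{0,1,2::nat}. (real m ^ 2 + 2 * m) / 9 + 2 * real_of_int (snd (eps i)) * (m / 3) + (real_of_int (snd (eps i)))\<^sup>2) / 3"
    by (simp only: SA_q_quad Suc M0 M1b) simp
  finally show ?case by (simp add: eps_def field_simps power2_eq_square)
qed

lemma Va: "Sum_any (\<lambda>x. q m x * (real_of_int (fst x) + - (m/3))\<^sup>2) = 2 * m / 9"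
  by (simp only: SA_q_quad M0 M1a M2a) (simp add: field_simps power2_eq_square)
lemma Vb: "Sum_any (\<lambda>x. q m x * (real_of_int (snd x) + - (m/3))\<^sup>2) = 2 * m / 9"
  by (simp only: SA_q_quad M0 M1b M2b) (simp add: field_simps power2_eq_square)

lemma SA_finite_sum: "fs f \<Longrightarrow> \<exists>A. finite A \<and> Sum_any f = sum f A \<and> (\<forall>x. x \<notin> A \<longrightarrow> f x = 0)"
  unfolding fs_def by (intro exI[of _ "{x. f x \<noteq> 0}"]) (auto simp: Sum_any.expand_set)

lemma dd_tri: "sqrt (dd m (z + w)) \<le> sqrt (dd m z) + sqrt (dd m w)"
proof -
  define f where "f x = q m x - q m (x + z)" for x
  define g where "g x = q m (x + z) - q m (x + z + w)" for x
  define A where "A = {x. q m x \<noteq> 0} \<union> {x. q m (x + z) \<noteq> 0} \<union> {x. q m (x + z + w) \<noteq> 0}"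
  have fA: "finite A" unfolding A_def using fs_q[of m] fs_shift[OF fs_q, of m z] fs_shift[OF fs_q, of m "z+w"]
    by (simp add: fs_def add.assoc)
  have outA: "\<And>x. x \<notin> A \<Longrightarrow> q m x = 0 \<and> q m (x + z) = 0 \<and> q m (x + z + w) = 0"
    unfolding A_def by auto
  have 1: "dd m (z + w) = (\<Sum>x\<in>A. (f x + g x)\<^sup>2)"
    unfolding dd_def f_def g_def by (subst SA_eq[OF fA]) (auto dest: outA simp: add.assoc)
  have 2: "dd m z = (\<Sum>x\<in>A. (f x)\<^sup>2)"
    unfolding dd_def f_def by (subst SA_eq[OF fA]) (auto dest: outA)
  have "dd m w = Sum_any (\<lambda>x. (q m (x + z) - q m (x + z + w))\<^sup>2)"
    unfolding dd_def using SA_shift[of "\<lambda>x. (q m x - q m (x + w))\<^sup>2" z]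
    by (simp add: add.commute add.left_commute)
  also have "\<dots> = (\<Sum>x\<in>A. (g x)\<^sup>2)"
    unfolding g_def by (subst SA_eq[OF fA]) (auto dest: outA)
  finally have 3: "dd m w = (\<Sum>x\<in>A. (g x)\<^sup>2)" .
  show ?thesis using L2_set_triangle_ineq[of f g A] 1 2 3 by (simp add: L2_set_def)
qed

lemma dd_sym: "dd m (- z) = dd m z"
  using dd_eq[of m z] dd_eq[of m "-z"] r_sym[of m z] by simp

lemma dd_zero: "dd m 0 = 0"
  using dd_eq[of m 0] by simp

lemma sd_line1: "sqrt (dd m (int k, 0)) \<le> real k * sqrt (dd m (1, 0))"
proof (induction k)
  case 0 then show ?case using dd_zero[of m] by (simp add: zero_prod_def)
next
  case (Suc k)
  have "(int (Suc k), 0::int) = (int k, 0) + (1, 0)" by simp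
  then have "sqrt (dd m (int (Suc k), 0)) \<le> sqrt (dd m (int k, 0)) + sqrt (dd m (1, 0))"
    using dd_tri[of m "(int k, 0)" "(1,0)"] by (simp add: add.commute)
  then show ?case using Suc by (simp add: algebra_simps)
qed

lemma sd_line2: "sqrt (dd m (0, int k)) \<le> real k * sqrt (dd m (0, 1))"
proof (induction k)
  case 0 then show ?case using dd_zero[of m] by (simp add: zero_prod_def)
next
  case (Suc k)
  have "(0::int, int (Suc k)) = (0, int k) + (0, 1)" by simp
  then have "sqrt (dd m (0, int (Suc k))) \<le> sqrt (dd m (0, int k)) + sqrt (dd m (0, 1))"
    using dd_tri[of m "(0, int k)" "(0,1)"] by (simp add: add.commute)
  then show ?case using Suc by (simp add: algebra_simps)
qed

lemma sd_1: "sqrt (dd m (a, 0)) \<le> \<bar>a\<bar> * sqrt (dd m (1, 0))"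
proof (cases "a \<ge> 0")
  case True
  then show ?thesis using sd_line1[of m "nat a"] by simp
next
  case False
  have "dd m (a, 0) = dd m (int (nat (-a)), 0)"
    using dd_sym[of m "(a,0)"] False by simp
  then show ?thesis using sd_line1[of m "nat (-a)"] False by simp
qed

lemma sd_2: "sqrt (dd m (0, b)) \<le> \<bar>b\<bar> * sqrt (dd m (0, 1))"
proof (cases "b \<ge> 0")
  case True
  then show ?thesis using sd_line2[of m "nat b"] by simp
next
  case False
  have "dd m (0, b) = dd m (0, int (nat (-b)))"
    using dd_sym[of m "(0,b)"] False by simp
  then show ?thesis using sd_line2[of m "nat (-b)"] False by simp
qed

lemma sq_ineq:
  fixes x y s1 s2 :: real
  assumes "0 \<le> x" "0 \<le> y" "0 \<le> s1" "0 \<le> s2"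
  shows "(x * s1 + y * s2)\<^sup>2 \<le> (x + y)\<^sup>2 * (s1\<^sup>2 + s2\<^sup>2)"
proof -
  have "0 \<le> (x * s2)\<^sup>2 + (y * s1)\<^sup>2 + 2 * x * y * (s1 - s2)\<^sup>2 + 2 * x * y * s1 * s2"
    using assms by (intro add_nonneg_nonneg) auto
  also have "\<dots> = (x + y)\<^sup>2 * (s1\<^sup>2 + s2\<^sup>2) - (x * s1 + y * s2)\<^sup>2"
    by (simp add: power2_eq_square algebra_simps)
  finally show ?thesis by simp
qed

lemma dd_bound: "dd m (a, b) \<le> (real_of_int (\<bar>a\<bar> + \<bar>b\<bar>))\<^sup>2 * (dd m (1,0) + dd m (0,1))"
proof -
  define s1 where "s1 = sqrt (dd m (1,0))"
  define s2 where "s2 = sqrt (dd m (0,1))"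
  have s1: "s1 \<ge> 0" "s1\<^sup>2 = dd m (1,0)" unfolding s1_def using dd_nonneg by auto
  have s2: "s2 \<ge> 0" "s2\<^sup>2 = dd m (0,1)" unfolding s2_def using dd_nonneg by auto
  have "sqrt (dd m (a, b)) \<le> sqrt (dd m (a, 0)) + sqrt (dd m (0, b))"
    using dd_tri[of m "(a,0)" "(0,b)"] by simp
  also have "\<dots> \<le> \<bar>a\<bar> * s1 + \<bar>b\<bar> * s2" unfolding s1_def s2_def using sd_1[of m a] sd_2[of m b] by simp
  finally have h: "sqrt (dd m (a, b)) \<le> \<bar>a\<bar> * s1 + \<bar>b\<bar> * s2" .
  have "dd m (a, b) = (sqrt (dd m (a, b)))\<^sup>2" using dd_nonneg by simp
  also have "\<dots> \<le> (\<bar>a\<bar> * s1 + \<bar>b\<bar> * s2)\<^sup>2"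
    using h dd_nonneg[of m "(a,b)"] by (intro power_mono) auto
  also have "\<dots> \<le> (real_of_int (\<bar>a\<bar> + \<bar>b\<bar>))\<^sup>2 * (s1\<^sup>2 + s2\<^sup>2)"
    using sq_ineq[of "\<bar>real_of_int a\<bar>" "\<bar>real_of_int b\<bar>" s1 s2] s1 s2 by simp
  finally show ?thesis using s1 s2 by simp
qed

lemma dd_sum_bound: "(\<Sum>m<n. dd m (1,0) + dd m (0,1)) \<le> 9"
proof -
  have "(\<Sum>m<n. dd m (1,0) + dd m (0,1)) \<le> (\<Sum>m<n. 9 * (r m 0 - r (Suc m) 0))"
  proof (intro sum_mono)
    fix m
    show "dd m (1,0) + dd m (0,1) \<le> 9 * (r m 0 - r (Suc m) 0)"
      using r_tele[of m] dd_nonneg[of m "(1,-1)"] by simp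
  qed
  also have "\<dots> = 9 * (\<Sum>m<n. r m 0 - r (Suc m) 0)"
    by (rule sum_distrib_left[symmetric])
  also have "(\<Sum>m<n. r m 0 - r (Suc m) 0) = r 0 0 - r n 0"
    by (rule sum_lessThan_telescope')
  finally have "(\<Sum>m<n. dd m (1,0) + dd m (0,1)) \<le> 9 * (r 0 0 - r n 0)" .
  then show ?thesis using r_nonneg[of n 0] by (simp add: r_0 zero_prod_def)
qed

lemma DD_bound: "(\<Sum>m<n. dd m (a, b)) \<le> 9 * (real_of_int (\<bar>a\<bar> + \<bar>b\<bar>))\<^sup>2"
proof -
  have "(\<Sum>m<n. dd m (a, b)) \<le> (\<Sum>m<n. (real_of_int (\<bar>a\<bar> + \<bar>b\<bar>))\<^sup>2 * (dd m (1,0) + dd m (0,1)))"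
    by (intro sum_mono dd_bound)
  also have "\<dots> = (real_of_int (\<bar>a\<bar> + \<bar>b\<bar>))\<^sup>2 * (\<Sum>m<n. dd m (1,0) + dd m (0,1))"
    by (simp add: sum_distrib_left)
  also have "\<dots> \<le> (real_of_int (\<bar>a\<bar> + \<bar>b\<bar>))\<^sup>2 * 9"
    by (intro mult_left_mono dd_sum_bound) auto
  finally show ?thesis by simp
qed

lemma r_psd:
  fixes A :: "'p \<Rightarrow> real" and v :: "'p \<Rightarrow> int \<times> int"
  assumes P: "finite P"
  shows "0 \<le> (\<Sum>p\<in>P. \<Sum>p'\<in>P. A p * A p' * r m (v p - v p'))"
proof -
  have fsij: "\<And>p p'. fs (\<lambda>x. A p * A p' * (q m (x - v p) * q m (x - v p')))"
    by (intro fs_mult2 fs_mult1 fs_shiftm fs_q)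
  have fsi: "\<And>p. fs (\<lambda>x. \<Sum>p'\<in>P. A p * A p' * (q m (x - v p) * q m (x - v p')))"
    using P fsij by (intro fs_sum) auto
  have "0 \<le> Sum_any (\<lambda>x. (\<Sum>p\<in>P. A p * q m (x - v p))\<^sup>2)"
    by (rule SA_nonneg) simp
  also have "\<dots> = Sum_any (\<lambda>x. \<Sum>p\<in>P. \<Sum>p'\<in>P. A p * A p' * (q m (x - v p) * q m (x - v p')))"
    by (rule Sum_any.cong) (simp add: power2_eq_square sum_product mult_ac)
  also have "\<dots> = (\<Sum>p\<in>P. \<Sum>p'\<in>P. Sum_any (\<lambda>x. A p * A p' * (q m (x - v p) * q m (x - v p'))))"
    using P fsi fsij by (simp add: SA_sum)
  also have "\<dots> = (\<Sum>p\<in>P. \<Sum>p'\<in>P. A p * A p' * r m (v p - v p'))"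
  proof (intro sum.cong refl)
    fix p p'
    have "Sum_any (\<lambda>x. A p * A p' * (q m (x - v p) * q m (x - v p'))) =
        A p * A p' * Sum_any (\<lambda>x. q m (x - v p) * q m (x - v p'))"
      by (rule SA_cmult, rule fs_mult1, rule fs_shiftm, rule fs_q)
    also have "Sum_any (\<lambda>x. q m (x - v p) * q m (x - v p')) = r m (v p - v p')"
      unfolding r_def using SA_shift[of "\<lambda>x. q m (x - v p) * q m (x - v p')" "v p"]
      by (simp add: algebra_simps)
    finally show "Sum_any (\<lambda>x. A p * A p' * (q m (x - v p) * q m (x - v p'))) = A p * A p' * r m (v p - v p')" .
  qed
  finally show ?thesis .
qed

lemma r_lower:
  assumes m: "m \<ge> 1"
  shows "r m 0 \<ge> 1 / (30 * real m)"
proof -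
  define A where "A = {0..int m} \<times> {0..int m}"
  have fA: "finite A" unfolding A_def by simp
  have qA: "\<And>x. x \<notin> A \<Longrightarrow> q m x = 0" unfolding A_def using q_supp by blast
  define c where "c = real m / 3"
  define u where "u x = (real_of_int (fst x) + - c)\<^sup>2 + (real_of_int (snd x) + - c)\<^sup>2" for x
  have u0: "\<And>x. 0 \<le> u x" unfolding u_def by simp
  have mpos: "real m > 0" using m by simp
  have SA_A: "\<And>g. Sum_any (\<lambda>x. q m x * g x) = (\<Sum>x\<in>A. q m x * g x)"
    by (rule SA_eq[OF fA]) (simp add: qA)
  have Su: "(\<Sum>x\<in>A. q m x * u x) = 4 * m / 9"
  proof -
    have "(\<Sum>x\<in>A. q m x * u x) = (\<Sum>x\<in>A. q m x * (real_of_int (fst x) + - c)\<^sup>2) + (\<Sum>x\<in>A. q m x * (real_of_int (snd x) + - c)\<^sup>2)"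
      unfolding u_def by (simp add: distrib_left sum.distrib)
    also have "\<dots> = 2 * m / 9 + 2 * m / 9"
    proof -
      have "(\<Sum>x\<in>A. q m x * (real_of_int (fst x) + - c)\<^sup>2) = 2 * m / 9"
        using Va[of m] SA_A[of "\<lambda>x. (real_of_int (fst x) + - c)\<^sup>2"] unfolding c_def by simp
      moreover have "(\<Sum>x\<in>A. q m x * (real_of_int (snd x) + - c)\<^sup>2) = 2 * m / 9"
        using Vb[of m] SA_A[of "\<lambda>x. (real_of_int (snd x) + - c)\<^sup>2"] unfolding c_def by simp
      ultimately show ?thesis by simp
    qed
    finally show ?thesis by simp
  qed
  have S1: "(\<Sum>x\<in>A. q m x) = 1"
    using M0[of m] SA_A[of "\<lambda>_. 1"] by simp
  define B where "B = {x\<in>A. u x \<le> real m}"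
  have BA: "B \<subseteq> A" unfolding B_def by auto
  have fB: "finite B" using fA BA finite_subset by blast
  have "(\<Sum>x\<in>A - B. q m x) \<le> (\<Sum>x\<in>A - B. q m x * u x / real m)"
  proof (rule sum_mono)
    fix x assume "x \<in> A - B"
    then have "u x > real m" unfolding B_def by auto
    then have "1 \<le> u x / real m" using mpos by simp
    then show "q m x \<le> q m x * u x / real m"
      using q_nonneg[of m x] mult_left_mono[of 1 "u x / real m" "q m x"] by simp
  qed
  also have "\<dots> \<le> (\<Sum>x\<in>A. q m x * u x / real m)"
    by (rule sum_mono2[OF fA]) (auto intro!: divide_nonneg_pos mult_nonneg_nonneg q_nonneg u0 mpos)
  also have "\<dots> = 4 / 9"
    using Su mpos by (simp add: sum_divide_distrib[symmetric])
  finally have AB: "(\<Sum>x\<in>A - B. q m x) \<le> 4 / 9" .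
  have "(\<Sum>x\<in>A. q m x) = (\<Sum>x\<in>A - B. q m x) + (\<Sum>x\<in>B. q m x)"
    using sum.subset_diff[OF BA fA] by simp
  then have SB: "(\<Sum>x\<in>B. q m x) \<ge> 5 / 9" using S1 AB by simp
  have rA: "r m 0 = (\<Sum>x\<in>A. (q m x)\<^sup>2)"
    unfolding r_def using SA_A[of "q m"] by (simp add: power2_eq_square)
  have q2: "(\<Sum>x\<in>B. (q m x)\<^sup>2) \<le> r m 0"
    unfolding rA by (rule sum_mono2[OF fA BA]) simp
  define I where "I = {\<lceil>c - sqrt m\<rceil>..\<lfloor>c + sqrt m\<rfloor>}"
  have BI: "B \<subseteq> I \<times> I"
  proof
    fix x assume "x \<in> B"
    then have "u x \<le> real m" unfolding B_def by auto
    moreover have "(real_of_int (fst x) + - c)\<^sup>2 \<le> u x" "(real_of_int (snd x) + - c)\<^sup>2 \<le> u x"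
      unfolding u_def by simp_all
    ultimately have h1: "(real_of_int (fst x) + - c)\<^sup>2 \<le> real m" and h2: "(real_of_int (snd x) + - c)\<^sup>2 \<le> real m"
      by linarith+
    have "\<bar>real_of_int (fst x) + - c\<bar> \<le> sqrt m" using real_sqrt_le_mono[OF h1] by simp
    moreover have "\<bar>real_of_int (snd x) + - c\<bar> \<le> sqrt m" using real_sqrt_le_mono[OF h2] by simp
    ultimately have "c - sqrt m \<le> real_of_int (fst x)" "real_of_int (fst x) \<le> c + sqrt m"
       "c - sqrt m \<le> real_of_int (snd x)" "real_of_int (snd x) \<le> c + sqrt m"
      by (simp_all add: abs_le_iff)
    then show "x \<in> I \<times> I" unfolding I_def
      by (simp add: mem_Times_iff ceiling_le_iff le_floor_iff)
  qed
  have cI: "real (card I) \<le> 2 * sqrt m + 1"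
  proof (cases "\<lfloor>c + sqrt m\<rfloor> - \<lceil>c - sqrt m\<rceil> + 1 \<ge> 0")
    case True
    have "real (card I) = real_of_int (\<lfloor>c + sqrt m\<rfloor> - \<lceil>c - sqrt m\<rceil> + 1)"
      unfolding I_def using True by simp
    also have "\<dots> \<le> (c + sqrt m) - (c - sqrt m) + 1"
      using of_int_floor_le[of "c + sqrt m"] le_of_int_ceiling[of "c - sqrt m"]
      by (simp only: of_int_add of_int_diff of_int_1)
    finally show ?thesis by simp
  next
    case False
    then show ?thesis unfolding I_def by simp
  qed
  have sm: "sqrt (real m) \<ge> 1" using m by simp
  have cB: "real (card B) \<le> 9 * real m"
  proof -
    have fII: "finite (I \<times> I)" unfolding I_def by simp
    have "card B \<le> card (I \<times> I)" by (rule card_mono[OF fII BI])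
    then have "real (card B) \<le> real (card I) * real (card I)" by (simp add: card_cartesian_product flip: of_nat_mult)
    also have "\<dots> \<le> (2 * sqrt m + 1) * (2 * sqrt m + 1)" using cI by (intro mult_mono) auto
    also have "\<dots> \<le> (3 * sqrt m) * (3 * sqrt m)" using sm by (intro mult_mono) auto
    also have "\<dots> = 9 * real m" by simp
    finally show ?thesis .
  qed
  have "(5/9)\<^sup>2 \<le> (\<Sum>x\<in>B. q m x)\<^sup>2" using SB by (intro power_mono) auto
  also have "\<dots> \<le> (\<Sum>x\<in>B. (q m x)\<^sup>2) * card B" by (rule sum_squared_le_sum_of_squares)
  also have "\<dots> \<le> r m 0 * (9 * real m)"
    using q2 cB by (intro mult_mono) (auto intro: sum_nonneg r_nonneg)
  finally have "25 / 81 \<le> r m 0 * (9 * real m)" by (simp add: power2_eq_square)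
  then have "25 / 729 \<le> r m 0 * real m" by simp
  then have "1 / 30 \<le> r m 0 * real m" by simp
  then show ?thesis using mpos by (simp add: field_simps)
qed

lemma G_harm: "(\<Sum>m<Suc n. r m 0) \<ge> harm n / 30"
proof (induction n)
  case 0 then show ?case by (simp add: harm_def r_0 zero_prod_def)
next
  case (Suc n)
  have a: "r (Suc n) 0 \<ge> 1 / (30 * real (Suc n))" by (rule r_lower) simp
  have b: "(\<Sum>m<Suc (Suc n). r m 0) = (\<Sum>m<Suc n. r m 0) + r (Suc n) 0" by simp
  have c: "harm (Suc n) / 30 = harm n / 30 + 1 / (30 * real (Suc n))"
    by (simp add: harm_Suc add_divide_distrib inverse_eq_divide)
  show ?case using a b c Suc by linarith
qed

lemma G_lower:
  assumes "t \<ge> 1"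
  shows "(\<Sum>m<t. r m 0) \<ge> ln (real t) / 30"
proof -
  obtain n where t: "t = Suc n" using assms by (cases t) auto
  have "ln (real t) \<le> harm n" using ln_le_harm[of n] t by (simp add: add.commute)
  then show ?thesis using G_harm[of n] t by simp
qed

primrec coef :: "nat \<Rightarrow> pt \<Rightarrow> pt \<times> pt \<Rightarrow> real" where
  "coef 0 v e = 0"
| "coef (Suc n) v e = (\<Sum>i\<in>{0,1,2::nat}. (if e = (pred_pt v i, v) then 1 else 0) + coef n (pred_pt v i) e) / 3"

primrec edges :: "nat \<Rightarrow> pt \<Rightarrow> (pt \<times> pt) set" where
  "edges 0 v = {}"
| "edges (Suc n) v = (\<Union>i\<in>{0,1,2::nat}. insert (pred_pt v i, v) (edges n (pred_pt v i)))"

definition pr :: "pt \<Rightarrow> int \<times> int" where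
  "pr v = (case v of (a, b, c) \<Rightarrow> (a, b))"

lemma rank_pred: "rank (pred_pt v i) = rank v - 1"
  by (cases v) (auto simp: rank_def pred_pt_def)

lemma pr_pred: "i \<in> {0,1,2::nat} \<Longrightarrow> pr (pred_pt v i) = pr v - eps i"
  by (cases v) (auto simp: pr_def pred_pt_def eps_def)

lemma edges_fin: "finite (edges n v)"
  by (induction n arbitrary: v) auto

lemma coef_out: "e \<notin> edges n v \<Longrightarrow> coef n v e = 0"
  by (induction n arbitrary: v) auto

lemma edges_head: "e \<in> edges n v \<Longrightarrow> rank (snd e) \<le> rank v"
proof (induction n arbitrary: v)
  case 0 then show ?case by simp
next
  case (Suc n)
  then obtain i where "i \<in> {0,1,2::nat}" "e = (pred_pt v i, v) \<or> e \<in> edges n (pred_pt v i)" by auto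
  then show ?case using Suc.IH[of "pred_pt v i"] rank_pred[of v i] by auto
qed

lemma edges_covers: "rank v = int n \<Longrightarrow> edges n v \<subseteq> covers"
proof (induction n arbitrary: v)
  case 0 then show ?case by simp
next
  case (Suc n)
  have r: "\<And>i. rank (pred_pt v i) = int n" using Suc.prems rank_pred by simp
  show ?case
  proof
    fix e assume "e \<in> edges (Suc n) v"
    then obtain i where i: "i \<in> {0,1,2::nat}" "e = (pred_pt v i, v) \<or> e \<in> edges n (pred_pt v i)" by auto
    from i(2) show "e \<in> covers"
    proof (elim disjE)
      assume "e = (pred_pt v i, v)"
      moreover have "i < 3" using i(1) by auto
      ultimately show ?thesis using r[of i] unfolding covers_def by auto
    next
      assume "e \<in> edges n (pred_pt v i)"
      then show ?thesis using Suc.IH[OF r[of i]] by auto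
    qed
  qed
qed

lemma edges_sub: "i \<in> {0,1,2::nat} \<Longrightarrow> edges n (pred_pt v i) \<subseteq> edges (Suc n) v"
  by auto
lemma edge_in: "i \<in> {0,1,2::nat} \<Longrightarrow> (pred_pt v i, v) \<in> edges (Suc n) v"
  by auto

lemma sum_coef_ext:
  assumes "finite F" "edges n v \<subseteq> F"
  shows "(\<Sum>e\<in>edges n v. coef n v e * g e) = (\<Sum>e\<in>F. coef n v e * g e)"
  by (rule sum.mono_neutral_left[OF assms(1,2)]) (auto simp: coef_out)

lemma Xrep:
  assumes h0: "\<forall>v. rank v = 0 \<longrightarrow> X v = X0"
    and hS: "\<forall>v. rank v \<ge> 1 \<longrightarrow>
           X v = (\<lambda>\<omega>. (1/3) * (\<Sum>i\<in>{0,1,2::nat}. X (pred_pt v i) \<omega> + W (pred_pt v i, v) \<omega>))"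
  shows "rank v = int n \<Longrightarrow> X v = (\<lambda>\<omega>. X0 \<omega> + (\<Sum>e\<in>edges n v. coef n v e * W e \<omega>))"
proof (induction n arbitrary: v)
  case 0
  then have "rank v = 0" by simp
  then have "X v = X0" using h0 by blast
  then show ?case by simp
next
  case (Suc n)
  define E where "E = edges (Suc n) v"
  have fE: "finite E" unfolding E_def by (rule edges_fin)
  have r: "\<And>i. rank (pred_pt v i) = int n" using Suc.prems rank_pred by simp
  have Xv: "X v = (\<lambda>\<omega>. (1/3) * (\<Sum>i\<in>{0,1,2::nat}. X (pred_pt v i) \<omega> + W (pred_pt v i, v) \<omega>))"
  proof -
    have "rank v \<ge> 1" using Suc.prems by simp
    then show ?thesis using hS by blast
  qed
  show ?case
  proof
    fix \<omega>
    have "\<And>i. i \<in> {0,1,2::nat} \<Longrightarrow> X (pred_pt v i) \<omega> + W (pred_pt v i, v) \<omega>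
        = X0 \<omega> + (\<Sum>e\<in>E. ((if e = (pred_pt v i, v) then 1 else 0) + coef n (pred_pt v i) e) * W e \<omega>)"
    proof -
      fix i :: nat assume i: "i \<in> {0,1,2}"
      have "X (pred_pt v i) \<omega> = X0 \<omega> + (\<Sum>e\<in>E. coef n (pred_pt v i) e * W e \<omega>)"
        using Suc.IH[OF r[of i]] sum_coef_ext[OF fE, of n "pred_pt v i" "\<lambda>e. W e \<omega>"] edges_sub[OF i, of n v]
        unfolding E_def by simp
      moreover have "W (pred_pt v i, v) \<omega> = (\<Sum>e\<in>E. (if e = (pred_pt v i, v) then 1 else 0) * W e \<omega>)"
      proof -
        have inE: "(pred_pt v i, v) \<in> E" unfolding E_def using edge_in[OF i] .
        have "(\<Sum>e\<in>E. (if e = (pred_pt v i, v) then 1 else 0) * W e \<omega>) = (\<Sum>e\<in>E. if e = (pred_pt v i, v) then W (pred_pt v i, v) \<omega> else 0)"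
          by (rule sum.cong) auto
        also have "\<dots> = W (pred_pt v i, v) \<omega>" using fE inE by (simp add: sum.delta')
        finally show ?thesis by simp
      qed
      ultimately show "X (pred_pt v i) \<omega> + W (pred_pt v i, v) \<omega>
        = X0 \<omega> + (\<Sum>e\<in>E. ((if e = (pred_pt v i, v) then 1 else 0) + coef n (pred_pt v i) e) * W e \<omega>)"
        by (simp add: distrib_right sum.distrib)
    qed
    then have "X v \<omega> = (1/3) * (\<Sum>i\<in>{0,1,2::nat}. X0 \<omega> + (\<Sum>e\<in>E. ((if e = (pred_pt v i, v) then 1 else 0) + coef n (pred_pt v i) e) * W e \<omega>))"
      using Xv by (metis (no_types, lifting) sum.cong)
    also have "\<dots> = X0 \<omega> + (\<Sum>e\<in>E. coef (Suc n) v e * W e \<omega>)"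
    proof -
      define g where "g i e = ((if e = (pred_pt v i, v) then 1 else 0) + coef n (pred_pt v i) e) * W e \<omega>" for i e
      have 1: "(\<Sum>i\<in>{0,1,2::nat}. X0 \<omega> + (\<Sum>e\<in>E. g i e)) = 3 * X0 \<omega> + (\<Sum>i\<in>{0,1,2::nat}. \<Sum>e\<in>E. g i e)"
        by (simp only: sum.distrib) simp
      have 2: "(\<Sum>i\<in>{0,1,2::nat}. \<Sum>e\<in>E. g i e) = (\<Sum>e\<in>E. \<Sum>i\<in>{0,1,2::nat}. g i e)"
        by (rule sum.swap)
      have 3: "(\<Sum>e\<in>E. coef (Suc n) v e * W e \<omega>) = (\<Sum>e\<in>E. (\<Sum>i\<in>{0,1,2::nat}. g i e) / 3)"
        by (rule sum.cong) (simp_all only: coef.simps g_def sum_distrib_right[symmetric] times_divide_eq_left)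
      show ?thesis unfolding g_def[symmetric] 1 2 3 by (simp add: sum_divide_distrib[symmetric])
    qed
    finally show "X v \<omega> = X0 \<omega> + (\<Sum>e\<in>edges (Suc n) v. coef (Suc n) v e * W e \<omega>)"
      unfolding E_def .
  qed
qed

lemma swap_eps: "(\<Sum>i\<in>{0,1,2::nat}. \<Sum>j\<in>{0,1,2::nat}. f (z - eps i + eps j)) =
   (\<Sum>i\<in>{0,1,2::nat}. \<Sum>j\<in>{0,1,2::nat}. (f (z + eps i - eps j) :: real))"
proof -
  have "(\<Sum>i\<in>{0,1,2::nat}. \<Sum>j\<in>{0,1,2::nat}. f (z - eps i + eps j)) =
     (\<Sum>j\<in>{0,1,2::nat}. \<Sum>i\<in>{0,1,2::nat}. f (z - eps i + eps j))"
    by (rule sum.swap)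
  also have "\<dots> = (\<Sum>j\<in>{0,1,2::nat}. \<Sum>i\<in>{0,1,2::nat}. f (z + eps j - eps i))"
    by (intro sum.cong refl) (simp add: algebra_simps)
  finally show ?thesis .
qed

lemma same_rank_pr: "rank u = rank v \<Longrightarrow> pr u = pr v \<Longrightarrow> u = v"
  by (cases u; cases v) (auto simp: rank_def pr_def)

lemma count_eq: "(\<Sum>i\<in>{0,1,2::nat}. \<Sum>j\<in>{0,1,2::nat}. (if (pred_pt u i, u) = (pred_pt v j, v) then 1 else 0 :: real))
   = (if u = v then 3 else 0)"
proof (cases "u = v")
  case True
  obtain a b c where "v = (a, b, c)" by (cases v)
  then show ?thesis using True by (simp add: pred_pt_def)
next
  case False
  then show ?thesis by simp
qed

lemma pr_rank_pred: "rank u = int (Suc n) \<Longrightarrow> rank (pred_pt u i) = int n"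
  using rank_pred[of u i] by simp

lemma kernel:
  "rank u = int n \<Longrightarrow> rank v = int n \<Longrightarrow> finite F \<Longrightarrow> edges n u \<subseteq> F \<Longrightarrow> edges n v \<subseteq> F \<Longrightarrow>
   (\<Sum>e\<in>F. coef n u e * coef n v e) = (\<Sum>m<n. r m (pr u - pr v)) / 3"
proof (induction n arbitrary: u v)
  case 0 then show ?case by simp
next
  case (Suc n)
  define cu where "cu i e = (if e = (pred_pt u i, u) then 1 else 0) + coef n (pred_pt u i) e" for i e
  define cv where "cv j e = (if e = (pred_pt v j, v) then 1 else 0) + coef n (pred_pt v j) e" for j e
  define z where "z = pr u - pr v"
  have A: "(\<Sum>e\<in>F. coef (Suc n) u e * coef (Suc n) v e) =
      (\<Sum>i\<in>{0,1,2::nat}. \<Sum>j\<in>{0,1,2::nat}. \<Sum>e\<in>F. cu i e * cv j e) / 9"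
  proof -
    have "(\<Sum>e\<in>F. coef (Suc n) u e * coef (Suc n) v e) =
        (\<Sum>e\<in>F. (\<Sum>i\<in>{0,1,2::nat}. \<Sum>j\<in>{0,1,2::nat}. cu i e * cv j e) / 9)"
      by (rule sum.cong) (simp_all only: coef.simps cu_def[symmetric] cv_def[symmetric] sum_product, simp add: algebra_simps)
    also have "\<dots> = (\<Sum>e\<in>F. \<Sum>i\<in>{0,1,2::nat}. \<Sum>j\<in>{0,1,2::nat}. cu i e * cv j e) / 9"
      by (simp add: sum_divide_distrib)
    also have "(\<Sum>e\<in>F. \<Sum>i\<in>{0,1,2::nat}. \<Sum>j\<in>{0,1,2::nat}. cu i e * cv j e)
        = (\<Sum>i\<in>{0,1,2::nat}. \<Sum>e\<in>F. \<Sum>j\<in>{0,1,2::nat}. cu i e * cv j e)"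
      by (rule sum.swap)
    also have "\<dots> = (\<Sum>i\<in>{0,1,2::nat}. \<Sum>j\<in>{0,1,2::nat}. \<Sum>e\<in>F. cu i e * cv j e)"
      by (intro sum.cong refl sum.swap)
    finally show ?thesis .
  qed
  have B: "\<And>i j. i \<in> {0,1,2::nat} \<Longrightarrow> j \<in> {0,1,2::nat} \<Longrightarrow>
     (\<Sum>e\<in>F. cu i e * cv j e) = (if (pred_pt u i, u) = (pred_pt v j, v) then 1 else 0)
        + (\<Sum>m<n. r m (z - eps i + eps j)) / 3"
  proof -
    fix i j :: nat assume i: "i \<in> {0,1,2}" and j: "j \<in> {0,1,2}"
    define a where "a = (pred_pt u i, u)"
    define b where "b = (pred_pt v j, v)"
    have aF: "a \<in> F" unfolding a_def using edge_in[OF i, of u n] Suc.prems(4) by auto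
    have bF: "b \<in> F" unfolding b_def using edge_in[OF j, of v n] Suc.prems(5) by auto
    have ru: "rank (pred_pt u i) = int n" using pr_rank_pred Suc.prems(1) by blast
    have rv: "rank (pred_pt v j) = int n" using pr_rank_pred Suc.prems(2) by blast
    have ca: "coef n (pred_pt v j) a = 0"
    proof (rule coef_out)
      show "a \<notin> edges n (pred_pt v j)"
        using edges_head[of a n "pred_pt v j"] rv Suc.prems(1) unfolding a_def by auto
    qed
    have cb: "coef n (pred_pt u i) b = 0"
    proof (rule coef_out)
      show "b \<notin> edges n (pred_pt u i)"
        using edges_head[of b n "pred_pt u i"] ru Suc.prems(2) unfolding b_def by auto
    qed
    have eF1: "edges n (pred_pt u i) \<subseteq> F" using edges_sub[OF i, of n u] Suc.prems(4) by auto
    have eF2: "edges n (pred_pt v j) \<subseteq> F" using edges_sub[OF j, of n v] Suc.prems(5) by auto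
    have IH: "(\<Sum>e\<in>F. coef n (pred_pt u i) e * coef n (pred_pt v j) e) = (\<Sum>m<n. r m (z - eps i + eps j)) / 3"
    proof -
      have "pr (pred_pt u i) - pr (pred_pt v j) = z - eps i + eps j"
        unfolding z_def pr_pred[OF i, of u] pr_pred[OF j, of v] by (simp add: algebra_simps)
      then show ?thesis using Suc.IH[OF ru rv Suc.prems(3) eF1 eF2] by simp
    qed
    have "(\<Sum>e\<in>F. cu i e * cv j e) = (\<Sum>e\<in>F. (if e = a then (if e = b then 1 else 0) + coef n (pred_pt v j) a else 0)
        + (if e = b then coef n (pred_pt u i) b else 0) + coef n (pred_pt u i) e * coef n (pred_pt v j) e)"
      by (rule sum.cong) (auto simp: cu_def cv_def a_def b_def algebra_simps)
    also have "\<dots> = (if a = b then 1 else 0) + (\<Sum>e\<in>F. coef n (pred_pt u i) e * coef n (pred_pt v j) e)"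
      using Suc.prems(3) aF bF ca cb by (simp add: sum.distrib sum.delta')
    finally show "(\<Sum>e\<in>F. cu i e * cv j e) = (if (pred_pt u i, u) = (pred_pt v j, v) then 1 else 0)
        + (\<Sum>m<n. r m (z - eps i + eps j)) / 3"
      using IH unfolding a_def b_def by simp
  qed
  have "(\<Sum>e\<in>F. coef (Suc n) u e * coef (Suc n) v e) =
      (\<Sum>i\<in>{0,1,2::nat}. \<Sum>j\<in>{0,1,2::nat}. (if (pred_pt u i, u) = (pred_pt v j, v) then 1 else 0)
        + (\<Sum>m<n. r m (z - eps i + eps j)) / 3) / 9"
    unfolding A by (intro arg_cong[where f="\<lambda>x. x / 9"] sum.cong refl B) auto
  also have "\<dots> = ((if u = v then 3 else 0) + (\<Sum>m<n. \<Sum>i\<in>{0,1,2::nat}. \<Sum>j\<in>{0,1,2::nat}. r m (z - eps i + eps j)) / 3) / 9"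
    by (simp only: sum.distrib count_eq sum_divide_distrib[symmetric] sum.swap[of _ _ "{..<n}"])
  also have "(\<Sum>m<n. \<Sum>i\<in>{0,1,2::nat}. \<Sum>j\<in>{0,1,2::nat}. r m (z - eps i + eps j))
      = (\<Sum>m<n. \<Sum>i\<in>{0,1,2::nat}. \<Sum>j\<in>{0,1,2::nat}. r m (z + eps i - eps j))"
    by (intro sum.cong refl swap_eps)
  also have "(if u = v then 3 else 0) = 3 * r 0 z"
    using same_rank_pr[of u v] Suc.prems(1,2) unfolding z_def r_0 by (auto simp flip: zero_prod_def)
  also have "(\<Sum>m<n. \<Sum>i\<in>{0,1,2::nat}. \<Sum>j\<in>{0,1,2::nat}. r m (z + eps i - eps j)) = 9 * (\<Sum>m<n. r (Suc m) z)"
  proof -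
    have "\<And>m. (\<Sum>i\<in>{0,1,2::nat}. \<Sum>j\<in>{0,1,2::nat}. r m (z + eps i - eps j)) = 9 * r (Suc m) z"
      unfolding r_Suc by simp
    then have "(\<Sum>m<n. \<Sum>i\<in>{0,1,2::nat}. \<Sum>j\<in>{0,1,2::nat}. r m (z + eps i - eps j)) = (\<Sum>m<n. 9 * r (Suc m) z)"
      by (intro sum.cong refl) 
    then show ?thesis by (simp add: sum_distrib_left)
  qed
  also have "(3 * r 0 z + 9 * (\<Sum>m<n. r (Suc m) z) / 3) / 9 = (\<Sum>m<Suc n. r m z) / 3"
    by (simp only: sum.lessThan_Suc_shift) (simp add: field_simps)
  finally show ?case unfolding z_def .
qed

lemma final_ineq:
  fixes S Q L C :: real
  assumes Q: "0 \<le> Q" and L: "0 < L" and C: "0 \<le> C" and h: "S\<^sup>2 * L \<le> C\<^sup>2 * Q"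
  shows "S / sqrt (S\<^sup>2 + Q) \<le> C / sqrt L"
proof (cases "S \<le> 0")
  case True
  then have "S / sqrt (S\<^sup>2 + Q) \<le> 0" using Q by (simp add: divide_nonpos_nonneg)
  also have "0 \<le> C / sqrt L" using C L by simp
  finally show ?thesis .
next
  case False
  then have Sp: "S > 0" by simp
  define V where "V = S\<^sup>2 + Q"
  have Vp: "V > 0" unfolding V_def using Sp Q by (simp add: add_pos_nonneg)
  have "S * sqrt L = sqrt (S\<^sup>2 * L)" using Sp L by (simp add: real_sqrt_mult)
  also have "\<dots> \<le> sqrt (C\<^sup>2 * V)"
  proof (rule real_sqrt_le_mono)
    have "C\<^sup>2 * Q \<le> C\<^sup>2 * V" unfolding V_def by (intro mult_left_mono) auto
    then show "S\<^sup>2 * L \<le> C\<^sup>2 * V" using h by linarith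
  qed
  also have "\<dots> = C * sqrt V" using C Vp by (simp add: real_sqrt_mult)
  finally have k: "S * sqrt L \<le> C * sqrt V" .
  have sL: "sqrt L > 0" using L by simp
  have sV: "sqrt V > 0" using Vp by simp
  have "S / sqrt V \<le> C / sqrt L"
    using k sL sV by (simp add: divide_le_eq field_simps)
  then show ?thesis unfolding V_def .
qed

lemma Q_bound:
  fixes A :: "'p \<Rightarrow> real" and v :: "'p \<Rightarrow> int \<times> int" and N t :: nat
  assumes P: "finite P" and cP: "card P \<le> N^2" and inj: "inj_on v P"
    and bd: "\<And>p p'. p \<in> P \<Longrightarrow> p' \<in> P \<Longrightarrow> \<bar>fst (v p - v p')\<bar> \<le> int N \<and> \<bar>snd (v p - v p')\<bar> \<le> int N"
    and t: "t \<ge> 1" and N: "N \<ge> 1"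
  shows "(\<Sum>p\<in>P. A p)\<^sup>2 * ln (real t) \<le> 1710 * real N ^ 4 *
     (\<Sum>p\<in>P. \<Sum>p'\<in>P. A p * A p' * ((\<Sum>m<t. r m (v p - v p')) / 3))"
proof -
  define R where "R m = (\<Sum>p\<in>P. \<Sum>p'\<in>P. A p * A p' * r m (v p - v p'))" for m
  define Q where "Q = (\<Sum>p\<in>P. \<Sum>p'\<in>P. A p * A p' * ((\<Sum>m<t. r m (v p - v p')) / 3))"
  define S where "S = (\<Sum>p\<in>P. A p)"
  define \<alpha> where "\<alpha> = (\<Sum>p\<in>P. (A p)\<^sup>2)"
  define G where "G = (\<Sum>m<t. r m 0)"
  define DD where "DD z = (\<Sum>m<t. dd m z)" for z
  have QR: "3 * Q = (\<Sum>m<t. R m)"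
  proof -
    have e: "\<And>p p'. 3 * (A p * A p' * ((\<Sum>m<t. r m (v p - v p')) / 3)) = (\<Sum>m<t. A p * A p' * r m (v p - v p'))"
    proof -
      fix p p'
      have "3 * (A p * A p' * ((\<Sum>m<t. r m (v p - v p')) / 3)) = A p * A p' * (\<Sum>m<t. r m (v p - v p'))" by simp
      also have "\<dots> = (\<Sum>m<t. A p * A p' * r m (v p - v p'))" by (rule sum_distrib_left)
      finally show "3 * (A p * A p' * ((\<Sum>m<t. r m (v p - v p')) / 3)) = (\<Sum>m<t. A p * A p' * r m (v p - v p'))" .
    qed
    have "3 * Q = (\<Sum>p\<in>P. \<Sum>p'\<in>P. 3 * (A p * A p' * ((\<Sum>m<t. r m (v p - v p')) / 3)))"
      unfolding Q_def by (simp only: sum_distrib_left)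
    also have "\<dots> = (\<Sum>p\<in>P. \<Sum>p'\<in>P. \<Sum>m<t. A p * A p' * r m (v p - v p'))"
      by (simp only: e)
    also have "\<dots> = (\<Sum>p\<in>P. \<Sum>m<t. \<Sum>p'\<in>P. A p * A p' * r m (v p - v p'))"
      by (intro sum.cong refl sum.swap)
    also have "\<dots> = (\<Sum>m<t. R m)"
      unfolding R_def by (rule sum.swap)
    finally show ?thesis .
  qed
  have R0: "R 0 = \<alpha>"
  proof -
    have "\<And>p p'. p \<in> P \<Longrightarrow> p' \<in> P \<Longrightarrow> r 0 (v p - v p') = (if p = p' then 1 else 0)"
      using inj unfolding r_0 by (auto simp flip: zero_prod_def dest: inj_onD)
    then have "R 0 = (\<Sum>p\<in>P. \<Sum>p'\<in>P. if p = p' then A p * A p' else 0)"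
      unfolding R_def by (intro sum.cong refl) auto
    also have "\<dots> = \<alpha>" unfolding \<alpha>_def using P by (simp add: power2_eq_square)
    finally show ?thesis .
  qed
  have Rnn: "\<And>m. R m \<ge> 0" unfolding R_def using r_psd[OF P] by blast
  obtain t' where t': "t = Suc t'" using t by (cases t) auto
  have ge1: "3 * Q \<ge> \<alpha>"
  proof -
    have "(\<Sum>m<t. R m) = (\<Sum>m<t'. R (Suc m)) + R 0" unfolding t' by (simp only: sum.lessThan_Suc_shift add.commute)
    moreover have "(\<Sum>m<t'. R (Suc m)) \<ge> 0" by (intro sum_nonneg Rnn)
    ultimately show ?thesis using QR R0 by linarith
  qed
  have rsplit: "\<And>z. (\<Sum>m<t. r m z) = G - DD z / 2"
  proof -
    fix z
    have "(\<Sum>m<t. r m z) = (\<Sum>m<t. r m 0 - dd m z / 2)"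
      by (intro sum.cong refl) (simp add: dd_eq field_simps)
    then show "(\<Sum>m<t. r m z) = G - DD z / 2"
      unfolding G_def DD_def by (simp add: sum_subtractf sum_divide_distrib)
  qed
  have DDb: "\<And>p p'. p \<in> P \<Longrightarrow> p' \<in> P \<Longrightarrow> 0 \<le> DD (v p - v p') \<and> DD (v p - v p') \<le> 36 * real N ^ 2"
  proof
    fix p p' assume pp: "p \<in> P" "p' \<in> P"
    show "0 \<le> DD (v p - v p')" unfolding DD_def by (intro sum_nonneg dd_nonneg)
    obtain a b where ab: "v p - v p' = (a, b)" by (cases "v p - v p'")
    have "\<bar>a\<bar> \<le> int N" "\<bar>b\<bar> \<le> int N" using bd[OF pp] ab by auto
    then have "real_of_int (\<bar>a\<bar> + \<bar>b\<bar>) \<le> 2 * real N" by linarith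
    then have "(real_of_int (\<bar>a\<bar> + \<bar>b\<bar>))\<^sup>2 \<le> (2 * real N)\<^sup>2"
      by (intro power_mono) auto
    then have "9 * (real_of_int (\<bar>a\<bar> + \<bar>b\<bar>))\<^sup>2 \<le> 36 * real N ^ 2" by (simp add: power2_eq_square)
    then show "DD (v p - v p') \<le> 36 * real N ^ 2"
      using DD_bound[where n=t and a=a and b=b] ab unfolding DD_def by simp
  qed
  have sumDD: "\<bar>\<Sum>p\<in>P. \<Sum>p'\<in>P. A p * A p' * DD (v p - v p')\<bar> \<le> 36 * real N ^ 4 * \<alpha>"
  proof -
    have "\<bar>\<Sum>p\<in>P. \<Sum>p'\<in>P. A p * A p' * DD (v p - v p')\<bar> \<le> (\<Sum>p\<in>P. \<Sum>p'\<in>P. \<bar>A p * A p' * DD (v p - v p')\<bar>)"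
      by (rule order_trans[OF sum_abs sum_mono]) (rule sum_abs)
    also have "\<dots> \<le> (\<Sum>p\<in>P. \<Sum>p'\<in>P. \<bar>A p\<bar> * \<bar>A p'\<bar> * (36 * real N ^ 2))"
    proof (intro sum_mono)
      fix p p' assume "p \<in> P" "p' \<in> P"
      then have "\<bar>DD (v p - v p')\<bar> \<le> 36 * real N ^ 2" using DDb by fastforce
      then show "\<bar>A p * A p' * DD (v p - v p')\<bar> \<le> \<bar>A p\<bar> * \<bar>A p'\<bar> * (36 * real N ^ 2)"
        by (simp add: abs_mult mult_left_mono)
    qed
    also have "\<dots> = 36 * real N ^ 2 * (\<Sum>p\<in>P. \<bar>A p\<bar>)\<^sup>2"
      by (simp add: power2_eq_square sum_product sum_distrib_left mult_ac)
    also have "(\<Sum>p\<in>P. \<bar>A p\<bar>)\<^sup>2 \<le> (\<Sum>p\<in>P. (\<bar>A p\<bar>)\<^sup>2) * card P"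
      by (rule sum_squared_le_sum_of_squares)
    also have "\<dots> \<le> \<alpha> * real N ^ 2"
    proof -
      have cPr: "real (card P) \<le> real N ^ 2" using cP by (metis of_nat_le_iff of_nat_power)
      show ?thesis unfolding \<alpha>_def power2_abs using cPr by (intro mult_left_mono) (auto intro: sum_nonneg)
    qed
    finally have X: "\<bar>\<Sum>p\<in>P. \<Sum>p'\<in>P. A p * A p' * DD (v p - v p')\<bar> \<le> 36 * real N ^ 2 * (\<alpha> * real N ^ 2)"
      by (simp add: mult_left_mono)
    have eq: "36 * real N ^ 2 * (\<alpha> * real N ^ 2) = 36 * real N ^ 4 * \<alpha>"
      by (simp add: eval_nat_numeral mult_ac)
    show ?thesis using X unfolding eq .
  qed
  have QS: "3 * Q = S\<^sup>2 * G - (\<Sum>p\<in>P. \<Sum>p'\<in>P. A p * A p' * DD (v p - v p')) / 2"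
  proof -
    have "3 * Q = (\<Sum>p\<in>P. \<Sum>p'\<in>P. A p * A p' * G - A p * A p' * DD (v p - v p') / 2)"
      unfolding Q_def rsplit sum_distrib_left by (intro sum.cong refl) (simp add: field_simps)
    also have "\<dots> = S\<^sup>2 * G - (\<Sum>p\<in>P. \<Sum>p'\<in>P. A p * A p' * DD (v p - v p')) / 2"
    proof -
      have SG: "(\<Sum>p\<in>P. \<Sum>p'\<in>P. A p * A p' * G) = S\<^sup>2 * G"
      proof -
        have "\<And>p. (\<Sum>p'\<in>P. A p * A p' * G) = A p * G * S"
          unfolding S_def by (simp add: sum_distrib_left mult_ac)
        then have "(\<Sum>p\<in>P. \<Sum>p'\<in>P. A p * A p' * G) = (\<Sum>p\<in>P. A p * G * S)" by simp
        also have "\<dots> = S * G * S" unfolding S_def by (simp only: sum_distrib_right)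
        finally show ?thesis by (simp add: power2_eq_square mult_ac)
      qed
      show ?thesis unfolding SG[symmetric] by (simp only: sum_subtractf sum_divide_distrib)
    qed
    finally show ?thesis .
  qed
  have ge2: "3 * Q \<ge> S\<^sup>2 * G - 18 * real N ^ 4 * \<alpha>"
    using QS sumDD by (simp add: abs_le_iff)
  have Gl: "G \<ge> ln (real t) / 30" unfolding G_def by (rule G_lower[OF t])
  have N4: "real N ^ 4 \<ge> 1" using N by simp
  have an: "\<alpha> \<ge> 0" unfolding \<alpha>_def by (intro sum_nonneg) simp
  have "S\<^sup>2 * ln (real t) \<le> 30 * (S\<^sup>2 * G)"
    using mult_left_mono[OF Gl, of "S\<^sup>2"] by simp
  also have "\<dots> \<le> 30 * (3 * Q + 18 * real N ^ 4 * \<alpha>)" using ge2 by simp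
  also have "\<dots> \<le> 30 * (3 * Q + 18 * real N ^ 4 * (3 * Q))"
    using ge1 N4 by (intro mult_left_mono add_left_mono) auto
  also have "\<dots> = 90 * Q + 1620 * real N ^ 4 * Q" by simp
  also have "\<dots> \<le> 1710 * real N ^ 4 * Q"
  proof -
    have "Q \<ge> 0" using ge1 an by simp
    then have "1 * Q \<le> real N ^ 4 * Q" using mult_right_mono[OF N4, of Q] by blast
    then have "90 * Q \<le> 90 * real N ^ 4 * Q" by linarith
    then show ?thesis by linarith
  qed
  finally show ?thesis unfolding S_def Q_def .
qed

theorem mainTheorem16:
  fixes M :: "'a measure"
    and X0 :: "'a \<Rightarrow> real"
    and W :: "pt \<times> pt \<Rightarrow> 'a \<Rightarrow> real"
    and X :: "pt \<Rightarrow> 'a \<Rightarrow> real"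
    and t N :: nat
    and a :: "nat \<Rightarrow> nat \<Rightarrow> real"
  assumes "prob_space M"
    and "distributed M lborel X0 std_normal_density"
    and "\<forall>e\<in>covers. distributed M lborel (W e) std_normal_density"
    and "prob_space.indep_vars M (\<lambda>_. borel)
           (\<lambda>k. case k of None \<Rightarrow> X0 | Some e \<Rightarrow> W e) (insert None (Some ` covers))"
    and "\<forall>v. rank v = 0 \<longrightarrow> X v = X0"
    and "\<forall>v. rank v \<ge> 1 \<longrightarrow>
           X v = (\<lambda>\<omega>. (1/3) * (\<Sum>i\<in>{0,1,2::nat}. X (pred_pt v i) \<omega> + W (pred_pt v i, v) \<omega>))"
    and "t \<ge> 2" and "N \<ge> 1"
    and "\<exists>i\<in>{1..N}. \<exists>j\<in>{1..N}. a i j \<noteq> 0"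
  shows "(let \<zeta> = (\<lambda>\<omega>. \<Sum>i\<in>{1..N}. \<Sum>j\<in>{1..N}.
                     a i j * X (int i, int j, int t - int i - int j) \<omega>)
          in cov M \<zeta> X0 / sqrt (prob_space.variance M \<zeta>))
         \<le> 2 ^ 24 * real N ^ 2 / sqrt (ln (real t))"
proof -
  interpret prob_space M by fact
  define pt where "pt i j = (int i, int j, int t - int i - int j)" for i j :: nat
  define P where "P = {1..N} \<times> {1..N}"
  define A where "A p = a (fst p) (snd p)" for p :: "nat \<times> nat"
  define vv where "vv p = (int (fst p), int (snd p))" for p :: "nat \<times> nat"
  define F where "F = (\<Union>p\<in>P. edges t (pt (fst p) (snd p)))"
  define \<zeta> where "\<zeta> = (\<lambda>\<omega>. \<Sum>i\<in>{1..N}. \<Sum>j\<in>{1..N}. a i j * X (int i, int j, int t - int i - int j) \<omega>)"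
  define S where "S = (\<Sum>i\<in>{1..N}. \<Sum>j\<in>{1..N}. a i j)"
  define b where "b e = (\<Sum>i\<in>{1..N}. \<Sum>j\<in>{1..N}. a i j * coef t (pt i j) e)" for e
  have fP: "finite P" unfolding P_def by simp
  have rk: "\<And>i j. rank (pt i j) = int t" by (simp add: pt_def rank_def)
  have prpt: "\<And>i j. pr (pt i j) = (int i, int j)" by (simp add: pt_def pr_def)
  have fF: "finite F" unfolding F_def using fP by (simp add: edges_fin)
  have FC: "F \<subseteq> covers" unfolding F_def using edges_covers[OF rk] by blast
  have eF: "\<And>i j. i \<in> {1..N} \<Longrightarrow> j \<in> {1..N} \<Longrightarrow> edges t (pt i j) \<subseteq> F"
    unfolding F_def P_def by force
  have Xp: "\<And>i j \<omega>. i \<in> {1..N} \<Longrightarrow> j \<in> {1..N} \<Longrightarrow>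
      X (pt i j) \<omega> = X0 \<omega> + (\<Sum>e\<in>F. coef t (pt i j) e * W e \<omega>)"
  proof -
    fix i j \<omega> assume ij: "i \<in> {1..N}" "j \<in> {1..N}"
    have "X (pt i j) = (\<lambda>\<omega>. X0 \<omega> + (\<Sum>e\<in>edges t (pt i j). coef t (pt i j) e * W e \<omega>))"
      by (rule Xrep[OF assms(5) assms(6) rk])
    then show "X (pt i j) \<omega> = X0 \<omega> + (\<Sum>e\<in>F. coef t (pt i j) e * W e \<omega>)"
      using sum_coef_ext[OF fF eF[OF ij], of "\<lambda>e. W e \<omega>"] by simp
  qed
  have zeta_eq: "\<And>\<omega>. \<zeta> \<omega> = S * X0 \<omega> + (\<Sum>e\<in>F. b e * W e \<omega>)"
  proof -
    fix \<omega>
    have "\<zeta> \<omega> = (\<Sum>i\<in>{1..N}. \<Sum>j\<in>{1..N}. a i j * X0 \<omega> + (\<Sum>e\<in>F. a i j * coef t (pt i j) e * W e \<omega>))"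
      unfolding \<zeta>_def pt_def[symmetric]
      by (intro sum.cong refl) (simp add: Xp distrib_left sum_distrib_left mult.assoc)
    also have "\<dots> = S * X0 \<omega> + (\<Sum>e\<in>F. b e * W e \<omega>)"
      unfolding S_def b_def
      by (simp add: sum.distrib sum_distrib_right sum.swap[of _ F])
    finally show "\<zeta> \<omega> = S * X0 \<omega> + (\<Sum>e\<in>F. b e * W e \<omega>)" .
  qed
  define K where "K = insert None (Some ` F)"
  define J where "J = insert None (Some ` covers)"
  define Y where "Y = (\<lambda>k. case k of None \<Rightarrow> X0 | Some e \<Rightarrow> W e)"
  define c where "c k = (case k of None \<Rightarrow> S | Some e \<Rightarrow> b e)" for k :: "(pt \<times> pt) option"
  define d where "d k = (case k of None \<Rightarrow> 1 | Some e \<Rightarrow> (0::real))" for k :: "(pt \<times> pt) option"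
  have fK: "finite K" unfolding K_def using fF by simp
  have KJ: "K \<subseteq> J" unfolding K_def J_def using FC by auto
  have DJ: "\<And>k. k \<in> J \<Longrightarrow> distributed M lborel (Y k) std_normal_density"
    unfolding J_def Y_def using assms(2,3) by auto
  have IJ: "indep_vars (\<lambda>_. borel) Y J" unfolding J_def Y_def using assms(4) by simp
  have sumK: "\<And>g. (\<Sum>k\<in>K. g k) = g None + (\<Sum>e\<in>F. g (Some e))"
    unfolding K_def using fF by (simp add: sum.reindex)
  have zK: "\<zeta> = (\<lambda>\<omega>. \<Sum>k\<in>K. c k * Y k \<omega>)"
    by (rule ext) (simp add: sumK zeta_eq c_def Y_def)
  have xK: "X0 = (\<lambda>\<omega>. \<Sum>k\<in>K. d k * Y k \<omega>)"
    by (rule ext) (simp add: sumK d_def Y_def)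
  note GL = gauss_lin[OF assms(1) DJ IJ fK KJ]
  have Ez: "integral\<^sup>L M \<zeta> = 0" unfolding zK by (rule GL(1))
  have Ex: "integral\<^sup>L M X0 = 0" unfolding xK by (rule GL(1))
  have cov_eq: "cov M \<zeta> X0 = S"
  proof -
    have "cov M \<zeta> X0 = integral\<^sup>L M (\<lambda>\<omega>. \<zeta> \<omega> * X0 \<omega>)"
      unfolding cov_def Ez Ex by simp
    also have "(\<lambda>\<omega>. \<zeta> \<omega> * X0 \<omega>) = (\<lambda>\<omega>. (\<Sum>k\<in>K. c k * Y k \<omega>) * (\<Sum>k\<in>K. d k * Y k \<omega>))"
      by (rule ext) (metis zK xK)
    also have "integral\<^sup>L M \<dots> = (\<Sum>k\<in>K. c k * d k)" by (rule GL(2))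
    also have "\<dots> = S" by (simp add: sumK c_def d_def)
    finally show ?thesis .
  qed
  define Q where "Q = (\<Sum>e\<in>F. (b e)\<^sup>2)"
  have var_eq: "prob_space.variance M \<zeta> = S\<^sup>2 + Q"
  proof -
    have "prob_space.variance M \<zeta> = integral\<^sup>L M (\<lambda>\<omega>. \<zeta> \<omega> * \<zeta> \<omega>)"
      unfolding Ez by (simp add: power2_eq_square)
    also have "\<dots> = (\<Sum>k\<in>K. c k * c k)" unfolding zK by (rule GL(2))
    also have "\<dots> = S\<^sup>2 + Q" by (simp add: sumK c_def Q_def power2_eq_square)
    finally show ?thesis .
  qed
  have Q_eq: "Q = (\<Sum>p\<in>P. \<Sum>p'\<in>P. A p * A p' * ((\<Sum>m<t. r m (vv p - vv p')) / 3))"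
  proof -
    have bP: "\<And>e. b e = (\<Sum>p\<in>P. A p * coef t (pt (fst p) (snd p)) e)"
      unfolding b_def P_def A_def by (simp add: sum.cartesian_product case_prod_beta)
    have "Q = (\<Sum>e\<in>F. \<Sum>p\<in>P. \<Sum>p'\<in>P. A p * A p' * (coef t (pt (fst p) (snd p)) e * coef t (pt (fst p') (snd p')) e))"
      unfolding Q_def bP by (intro sum.cong refl) (simp add: power2_eq_square sum_product mult_ac)
    also have "\<dots> = (\<Sum>p\<in>P. \<Sum>p'\<in>P. \<Sum>e\<in>F. A p * A p' * (coef t (pt (fst p) (snd p)) e * coef t (pt (fst p') (snd p')) e))"
      by (simp add: sum.swap[of _ F])
    also have "\<dots> = (\<Sum>p\<in>P. \<Sum>p'\<in>P. A p * A p' * ((\<Sum>m<t. r m (vv p - vv p')) / 3))"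
    proof (intro sum.cong refl)
      fix p p' assume p: "p \<in> P" and p': "p' \<in> P"
      have e1: "edges t (pt (fst p) (snd p)) \<subseteq> F" using p eF unfolding P_def by (auto simp: mem_Times_iff)
      have e2: "edges t (pt (fst p') (snd p')) \<subseteq> F" using p' eF unfolding P_def by (auto simp: mem_Times_iff)
      have "(\<Sum>e\<in>F. coef t (pt (fst p) (snd p)) e * coef t (pt (fst p') (snd p')) e) = (\<Sum>m<t. r m (vv p - vv p')) / 3"
        using kernel[OF rk rk fF e1 e2] by (simp add: prpt vv_def)
      then show "(\<Sum>e\<in>F. A p * A p' * (coef t (pt (fst p) (snd p)) e * coef t (pt (fst p') (snd p')) e)) =
          A p * A p' * ((\<Sum>m<t. r m (vv p - vv p')) / 3)"
        by (simp add: sum_distrib_left[symmetric])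
    qed
    finally show ?thesis .
  qed
  have SP: "S = (\<Sum>p\<in>P. A p)" unfolding S_def P_def A_def by (simp add: sum.cartesian_product case_prod_beta)
  have cP: "card P \<le> N^2" unfolding P_def by (simp add: power2_eq_square)
  have inj: "inj_on vv P" unfolding vv_def by (auto intro: inj_onI)
  have bd: "\<And>p p'. p \<in> P \<Longrightarrow> p' \<in> P \<Longrightarrow> \<bar>fst (vv p - vv p')\<bar> \<le> int N \<and> \<bar>snd (vv p - vv p')\<bar> \<le> int N"
    unfolding P_def vv_def by (auto simp: mem_Times_iff)
  have QB: "S\<^sup>2 * ln (real t) \<le> 1710 * real N ^ 4 * Q"
    unfolding SP Q_eq using assms(7,8) by (intro Q_bound[OF fP cP inj bd]) auto
  have Qnn: "Q \<ge> 0" unfolding Q_def by (intro sum_nonneg) simp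
  have Lp: "ln (real t) > 0" using assms(7) by simp
  have "S\<^sup>2 * ln (real t) \<le> (2 ^ 24 * real N ^ 2)\<^sup>2 * Q"
  proof -
    have "1710 * real N ^ 4 * Q \<le> 2 ^ 48 * real N ^ 4 * Q"
      using Qnn by (intro mult_right_mono) auto
    also have "\<dots> = (2 ^ 24 * real N ^ 2)\<^sup>2 * Q" by (simp add: power_mult_distrib power2_eq_square eval_nat_numeral)
    finally show ?thesis using QB by linarith
  qed
  from final_ineq[OF Qnn Lp _ this]
  have "S / sqrt (S\<^sup>2 + Q) \<le> 2 ^ 24 * real N ^ 2 / sqrt (ln (real t))" by simp
  then show ?thesis unfolding Let_def \<zeta>_def[symmetric] cov_eq var_eq .
qed

end
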